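(* For $1\le i<d$, the normalizer $\{g\in O_d(\mathbb C): gL^{(i)}=L^{(i)}\}$ of $L^{(i)}$ is equal to $N_d^{d-i}(\mathbb C)$.
   Context: Fix $d\ge2$. $V=\mathbb C^d\oplus\mathfrak{so}(d,\mathbb C)$, elements $(v,M)$ with $v=(c_1,\dots,c_d)^\top$, $M$ complex skew-symmetric, $M_{ij}=c_{ij}=-M_{ji}$ for $i<j$; $O_d(\mathbb C)=\{A:AA^\top=I\}$ acts by $A\cdot(v,M)=(Av,AMA^\top)$. $L^{(1)}=\{c_1=\dots=c_{d-1}=0\}$ and for $2\le i\le d-1$, $L^{(i)}=\{(v,M)\in L^{(i-1)}:c_{k(d-i+2)}=0,\ 1\le k\le d-i\}$. For $1\le j<d$, $N_d^{j}(\mathbb C)$ is the subgroup of $O_d(\mathbb C)$ consisting of block-diagonal matrices $\mathrm{diag}(B,\pm1,\dots,\pm1)$ with $B\in O_j(\mathbb C)$ (upper-left $j\times j$ block) and the remaining $d-j$ diagonal entries each in $\{-1,1\}$ (all other entries zero). *)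

theory Defs
  imports Complex_Main "Jordan_Normal_Form.Matrix"
begin

text \<open>Matrices/vectors are 0-indexed in Jordan_Normal_Form: the paper's c_i is v $ (i-1)
  and c_ij is M $$ (i-1, j-1).\<close>

definition orth_group :: "nat \<Rightarrow> complex mat set" where
  "orth_group d = {A \<in> carrier_mat d d. A * transpose_mat A = 1\<^sub>m d}"

definition Vsp :: "nat \<Rightarrow> (complex vec \<times> complex mat) set" where
  "Vsp d = {(v, M). v \<in> carrier_vec d \<and> M \<in> carrier_mat d d \<and> transpose_mat M = - M}"

definition act :: "complex mat \<Rightarrow> complex vec \<times> complex mat \<Rightarrow> complex vec \<times> complex mat" where
  "act A x = (A *\<^sub>v fst x, A * snd x * transpose_mat A)"

fun Lsub :: "nat \<Rightarrow> nat \<Rightarrow> (complex vec \<times> complex mat) set" where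
  "Lsub d 0 = Vsp d"
| "Lsub d (Suc 0) = {x \<in> Vsp d. \<forall>j\<in>{1..d-1}. fst x $ (j - 1) = 0}"
| "Lsub d (Suc (Suc n)) =
     {x \<in> Lsub d (Suc n). \<forall>k\<in>{1..d - Suc (Suc n)}.
        snd x $$ (k - 1, (d - Suc (Suc n) + 2) - 1) = 0}"

definition Nsub :: "nat \<Rightarrow> nat \<Rightarrow> complex mat set" where
  "Nsub d j = {A \<in> orth_group d. \<exists>B \<in> orth_group j. \<exists>s :: nat \<Rightarrow> complex.
      (\<forall>r\<in>{j..<d}. s r = 1 \<or> s r = -1) \<and>
      A = mat d d (\<lambda>(r, c). if r < j \<and> c < j then B $$ (r, c)
                             else if r = c then s r else 0)}"

end

theory Submission imports Defs "Jordan_Normal_Form.Determinant" begin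

lemma mult_entry:
  assumes "A \<in> carrier_mat n n" "B \<in> carrier_mat n n" "r < n" "c < n"
  shows "(A * B) $$ (r, c) = (\<Sum>a\<in>{0..<n}. A $$ (r, a) * B $$ (a, c))"
  using assms by (simp add: scalar_prod_def)

lemma sum_single:
  fixes a n :: nat
  assumes "a < n" "\<forall>b<n. b \<noteq> a \<longrightarrow> f b = 0"
  shows "(\<Sum>b\<in>{0..<n}. f b) = f a"
proof -
  have "sum f {0..<n} = f a + sum f ({0..<n} - {a})" using assms by (intro sum.remove) auto
  moreover have "sum f ({0..<n} - {a}) = 0" using assms by (intro sum.neutral) auto
  ultimately show ?thesis by simp
qed

definition Lc :: "nat \<Rightarrow> nat \<Rightarrow> (complex vec \<times> complex mat) set" where
  "Lc d i = {x \<in> Vsp d. (\<forall>k. k + 1 < d \<longrightarrow> fst x $ k = 0) \<and>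
     (\<forall>k c. d - i < c \<and> c < d \<and> k + 1 < c \<longrightarrow> snd x $$ (k, c) = 0)}"

lemma L1: "Lsub d (Suc 0) = Lc d (Suc 0)"
proof -
  have "(\<forall>j\<in>{1..d-1}. v $ (j - 1) = 0) \<longleftrightarrow> (\<forall>k. k + 1 < d \<longrightarrow> v $ k = 0)" for v :: "complex vec"
  proof
    assume H: "\<forall>j\<in>{1..d-1}. v $ (j - 1) = 0"
    show "\<forall>k. k + 1 < d \<longrightarrow> v $ k = 0"
    proof (intro allI impI)
      fix k assume "k + 1 < d"
      then have "k + 1 \<in> {1..d-1}" by simp
      then show "v $ k = 0" using H by fastforce
    qed
  next
    assume H: "\<forall>k. k + 1 < d \<longrightarrow> v $ k = 0"
    show "\<forall>j\<in>{1..d-1}. v $ (j - 1) = 0"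
    proof
      fix j assume "j \<in> {1..d-1}"
      then have "(j - 1) + 1 < d" by auto
      then show "v $ (j - 1) = 0" using H by blast
    qed
  qed
  moreover have "\<forall>k c. d - Suc 0 < c \<and> c < d \<and> Suc k < c \<longrightarrow> snd x $$ (k, c) = 0" for x :: "complex vec \<times> complex mat" by auto
  ultimately show ?thesis unfolding Lc_def by simp
qed

lemma LS: assumes "Suc (Suc n) < d"
  shows "Lc d (Suc (Suc n)) = {x \<in> Lc d (Suc n). \<forall>k\<in>{1..d - Suc (Suc n)}.
        snd x $$ (k - 1, (d - Suc (Suc n) + 2) - 1) = 0}"
proof -
  have e: "d - Suc (Suc n) + 2 - 1 = d - Suc n" using assms by simp
  have "(\<forall>k c. d - Suc (Suc n) < c \<and> c < d \<and> k + 1 < c \<longrightarrow> M $$ (k, c) = 0) \<longleftrightarrow>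
     (\<forall>k c. d - Suc n < c \<and> c < d \<and> k + 1 < c \<longrightarrow> M $$ (k, c) = 0) \<and>
     (\<forall>k\<in>{1..d - Suc (Suc n)}. M $$ (k - 1, d - Suc n) = 0)" for M :: "complex mat"
  proof (intro iffI conjI allI impI ballI)
    fix k c assume H: "\<forall>k c. d - Suc (Suc n) < c \<and> c < d \<and> k + 1 < c \<longrightarrow> M $$ (k, c) = 0"
      and kc: "d - Suc n < c \<and> c < d \<and> k + 1 < c"
    have "d - Suc (Suc n) \<le> d - Suc n" by (rule diff_le_mono2) simp
    then have "d - Suc (Suc n) < c" using kc by (rule le_less_trans[OF _ conjunct1])
    then show "M $$ (k, c) = 0" using H kc by blast
  next
    fix k assume H: "\<forall>k c. d - Suc (Suc n) < c \<and> c < d \<and> k + 1 < c \<longrightarrow> M $$ (k, c) = 0"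
      and k: "k \<in> {1..d - Suc (Suc n)}"
    have "d - Suc (Suc n) < d - Suc n \<and> d - Suc n < d \<and> (k - 1) + 1 < d - Suc n" using k assms by auto
    then show "M $$ (k - 1, d - Suc n) = 0" using H by blast
  next
    fix k c assume H: "(\<forall>k c. d - Suc n < c \<and> c < d \<and> k + 1 < c \<longrightarrow> M $$ (k, c) = 0) \<and>
     (\<forall>k\<in>{1..d - Suc (Suc n)}. M $$ (k - 1, d - Suc n) = 0)"
      and kc: "d - Suc (Suc n) < c \<and> c < d \<and> k + 1 < c"
    show "M $$ (k, c) = 0"
    proof (cases "c = d - Suc n")
      case True
      then have "k + 1 \<in> {1..d - Suc (Suc n)}" using kc by auto
      then show ?thesis using H True by fastforce
    next
      case False
      then have "d - Suc n < c" using kc by auto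
      then show ?thesis using H kc by blast
    qed
  qed
  then show ?thesis unfolding Lc_def e by auto
qed

lemma L_char:
  assumes "1 \<le> i" "i < d"
  shows "Lsub d i = Lc d i"
proof -
  have "Suc n < d \<Longrightarrow> Lsub d (Suc n) = Lc d (Suc n)" for n
  proof (induction n)
    case 0 then show ?case using L1 by simp
  next
    case (Suc n) then show ?case using LS[of n d] by simp
  qed
  moreover obtain n where "i = Suc n" using assms by (cases i) auto
  ultimately show ?thesis using assms by simp
qed

lemma orth_T:
  assumes "g \<in> orth_group d"
  shows "transpose_mat g * g = 1\<^sub>m d"
  using assms mat_mult_left_right_inverse[of g d "transpose_mat g"]
  by (auto simp: orth_group_def)

lemma orth_row:
  assumes "g \<in> orth_group d" "r < d" "c < d"
  shows "(\<Sum>k\<in>{0..<d}. g $$ (r, k) * g $$ (c, k)) = (if r = c then 1 else 0)"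
proof -
  have g: "g \<in> carrier_mat d d" using assms by (auto simp: orth_group_def)
  have "(g * transpose_mat g) $$ (r, c) = (if r = c then 1 else 0)"
    using assms by (auto simp: orth_group_def)
  then show ?thesis using mult_entry[of g d "transpose_mat g" r c] g assms by auto
qed

lemma orth_col:
  assumes "g \<in> orth_group d" "r < d" "c < d"
  shows "(\<Sum>k\<in>{0..<d}. g $$ (k, r) * g $$ (k, c)) = (if r = c then 1 else 0)"
proof -
  have g: "g \<in> carrier_mat d d" using assms by (auto simp: orth_group_def)
  have "(transpose_mat g * g) $$ (r, c) = (if r = c then 1 else 0)"
    using orth_T[OF assms(1)] assms by auto
  then show ?thesis using mult_entry[of "transpose_mat g" d g r c] g assms by auto
qed

lemma N_char:
  assumes "j \<le> d"
  shows "Nsub d j = {A \<in> orth_group d. \<forall>r<d. \<forall>c<d. r \<noteq> c \<and> (j \<le> r \<or> j \<le> c) \<longrightarrow> A $$ (r, c) = 0}"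
proof (rule equalityI; rule subsetI)
  fix A assume "A \<in> Nsub d j"
  then show "A \<in> {A \<in> orth_group d. \<forall>r<d. \<forall>c<d. r \<noteq> c \<and> (j \<le> r \<or> j \<le> c) \<longrightarrow> A $$ (r, c) = 0}"
    by (auto simp: Nsub_def)
next
  fix A assume "A \<in> {A \<in> orth_group d. \<forall>r<d. \<forall>c<d. r \<noteq> c \<and> (j \<le> r \<or> j \<le> c) \<longrightarrow> A $$ (r, c) = 0}"
  then have O: "A \<in> orth_group d" and Z: "\<And>r c. r < d \<Longrightarrow> c < d \<Longrightarrow> r \<noteq> c \<Longrightarrow> j \<le> r \<or> j \<le> c \<Longrightarrow> A $$ (r, c) = 0"
    by auto
  have Ac: "A \<in> carrier_mat d d" using O by (auto simp: orth_group_def)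
  define B where "B = mat j j (\<lambda>(r, c). A $$ (r, c))"
  have "B * transpose_mat B = 1\<^sub>m j"
  proof (rule eq_matI)
    fix r c assume rc: "r < dim_row (1\<^sub>m j :: complex mat)" "c < dim_col (1\<^sub>m j :: complex mat)"
    then have rc': "r < j" "c < j" by auto
    have "(B * transpose_mat B) $$ (r, c) = (\<Sum>k\<in>{0..<j}. A $$ (r, k) * A $$ (c, k))"
      using mult_entry[of B j "transpose_mat B" r c] rc' by (auto simp: B_def)
    also have "\<dots> = (\<Sum>k\<in>{0..<d}. A $$ (r, k) * A $$ (c, k))"
      using rc' assms by (intro sum.mono_neutral_left) (auto simp: Z)
    also have "\<dots> = (if r = c then 1 else 0)" using orth_row[OF O] rc' assms by auto
    finally show "(B * transpose_mat B) $$ (r, c) = 1\<^sub>m j $$ (r, c)" using rc' by auto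
  qed (auto simp: B_def)
  then have BO: "B \<in> orth_group j" by (auto simp: orth_group_def B_def)
  have s: "A $$ (r, r) = 1 \<or> A $$ (r, r) = -1" if "r \<in> {j..<d}" for r
  proof -
    have "(\<Sum>k\<in>{0..<d}. A $$ (r, k) * A $$ (r, k)) = A $$ (r, r) * A $$ (r, r)"
      using that by (intro sum_single) (auto simp: Z)
    then have "A $$ (r, r) * A $$ (r, r) = 1" using orth_row[OF O, of r r] that by auto
    then show ?thesis by (simp add: square_eq_1_iff)
  qed
  have eq: "A = mat d d (\<lambda>(r, c). if r < j \<and> c < j then B $$ (r, c)
                             else if r = c then (\<lambda>r. A $$ (r, r)) r else 0)"
    using Ac by (intro eq_matI) (auto simp: B_def Z)
  show "A \<in> Nsub d j" unfolding Nsub_def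
    apply (rule CollectI, rule conjI, rule O, rule bexI[OF _ BO], rule exI[of _ "\<lambda>r. A $$ (r, r)"], rule conjI)
    using s apply simp
    by (rule eq)
qed

lemma preserve:
  assumes "1 \<le> i" "i < d" "g \<in> orth_group d"
    and Z: "\<And>r c. r < d \<Longrightarrow> c < d \<Longrightarrow> r \<noteq> c \<Longrightarrow> d - i \<le> r \<or> d - i \<le> c \<Longrightarrow> g $$ (r, c) = 0"
    and x: "x \<in> Lsub d i"
  shows "act g x \<in> Lsub d i"
proof -
  obtain v M where xv: "x = (v, M)" by (cases x)
  have g: "g \<in> carrier_mat d d" using assms(3) by (auto simp: orth_group_def)
  have xL: "x \<in> Lc d i" using x L_char[OF assms(1,2)] by simp
  then have v: "v \<in> carrier_vec d" and M: "M \<in> carrier_mat d d" and sk: "transpose_mat M = - M"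
    and v0: "\<And>k. k + 1 < d \<Longrightarrow> v $ k = 0"
    and M0: "\<And>k c. d - i < c \<Longrightarrow> c < d \<Longrightarrow> k + 1 < c \<Longrightarrow> M $$ (k, c) = 0"
    by (auto simp: Lc_def Vsp_def xv)
  have gM: "g * M \<in> carrier_mat d d" using g M by simp
  have gT: "transpose_mat g \<in> carrier_mat d d" using g by simp
  have c1: "g *\<^sub>v v \<in> carrier_vec d" using g v by simp
  have c2: "g * M * transpose_mat g \<in> carrier_mat d d" using gM gT by simp
  have c3: "transpose_mat (g * M * transpose_mat g) = - (g * M * transpose_mat g)"
  proof -
    have "transpose_mat (g * M * transpose_mat g) = transpose_mat (transpose_mat g) * transpose_mat (g * M)"
      using transpose_mult[OF gM gT] .
    also have "\<dots> = g * (transpose_mat M * transpose_mat g)" using transpose_mult[OF g M] by simp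
    also have "\<dots> = g * (- M * transpose_mat g)" using sk by simp
    also have "\<dots> = - (g * (M * transpose_mat g))" using g M gT by simp
    also have "\<dots> = - (g * M * transpose_mat g)" using g M gT by simp
    finally show ?thesis .
  qed
  have c4: "(g *\<^sub>v v) $ k = 0" if "k + 1 < d" for k
  proof -
    have "(g *\<^sub>v v) $ k = (\<Sum>a\<in>{0..<d}. g $$ (k, a) * v $ a)" using that g v by (simp add: scalar_prod_def)
    also have "\<dots> = 0"
    proof (rule sum.neutral, rule ballI)
      fix a assume a: "a \<in> {0..<d}"
      show "g $$ (k, a) * v $ a = 0"
      proof (cases "a + 1 < d")
        case True then show ?thesis using v0 by simp
      next
        case False
        then have "a = d - 1" using a by auto
        then have "g $$ (k, a) = 0" using that assms(1,2) by (intro Z) auto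
        then show ?thesis by simp
      qed
    qed
    finally show ?thesis .
  qed
  have c5: "(g * M * transpose_mat g) $$ (k, c) = 0" if kc: "d - i < c" "c < d" "k + 1 < c" for k c
  proof -
    have k: "k < d" using kc by simp
    have gMk: "(g * M) $$ (k, c) = 0"
    proof -
      have "(g * M) $$ (k, c) = (\<Sum>a\<in>{0..<d}. g $$ (k, a) * M $$ (a, c))" using mult_entry[OF g M k kc(2)] .
      also have "\<dots> = 0"
      proof (rule sum.neutral, rule ballI)
        fix a assume a: "a \<in> {0..<d}"
        show "g $$ (k, a) * M $$ (a, c) = 0"
        proof (cases "a = k \<or> a < d - i")
          case True
          then have "a + 1 < c" using kc by auto
          then show ?thesis using M0[OF kc(1,2)] by simp
        next
          case False
          then have "g $$ (k, a) = 0" using a k kc by (intro Z) auto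
          then show ?thesis by simp
        qed
      qed
      finally show ?thesis .
    qed
    have "(g * M * transpose_mat g) $$ (k, c) = (\<Sum>b\<in>{0..<d}. (g * M) $$ (k, b) * transpose_mat g $$ (b, c))"
      using mult_entry[OF gM gT k kc(2)] .
    also have "\<dots> = (g * M) $$ (k, c) * transpose_mat g $$ (c, c)"
    proof (rule sum_single)
      show "c < d" by fact
      show "\<forall>b<d. b \<noteq> c \<longrightarrow> (g * M) $$ (k, b) * transpose_mat g $$ (b, c) = 0"
      proof (intro allI impI)
        fix b assume b: "b < d" "b \<noteq> c"
        then have "g $$ (c, b) = 0" using kc by (intro Z) auto
        then show "(g * M) $$ (k, b) * transpose_mat g $$ (b, c) = 0" using b kc g by simp
      qed
    qed
    also have "\<dots> = 0" using gMk by simp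
    finally show ?thesis .
  qed
  show ?thesis
    unfolding L_char[OF assms(1,2)] Lc_def Vsp_def act_def xv
    using c1 c2 c3 c4 c5 by simp
qed

lemma act_inv:
  assumes "g \<in> orth_group d" "x \<in> Vsp d"
  shows "act g (act (transpose_mat g) x) = x"
proof -
  obtain v M where xv: "x = (v, M)" by (cases x)
  have g: "g \<in> carrier_mat d d" and gg: "g * transpose_mat g = 1\<^sub>m d" using assms(1) by (auto simp: orth_group_def)
  have gT: "transpose_mat g \<in> carrier_mat d d" using g by simp
  have v: "v \<in> carrier_vec d" and M: "M \<in> carrier_mat d d" using assms(2) by (auto simp: Vsp_def xv)
  have 1: "g *\<^sub>v (transpose_mat g *\<^sub>v v) = v"
  proof -
    have "g *\<^sub>v (transpose_mat g *\<^sub>v v) = (g * transpose_mat g) *\<^sub>v v" using g gT v by simp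
    then show ?thesis using gg v by simp
  qed
  have 2: "g * (transpose_mat g * M * transpose_mat (transpose_mat g)) * transpose_mat g = M"
  proof -
    have "g * (transpose_mat g * M * transpose_mat (transpose_mat g)) * transpose_mat g
       = g * (transpose_mat g * (M * g)) * transpose_mat g" using g gT M by simp
    also have "g * (transpose_mat g * (M * g)) = (g * transpose_mat g) * (M * g)"
      using g gT M by (intro assoc_mult_mat[symmetric]) auto
    also have "\<dots> = M * g" using gg g M by simp
    also have "M * g * transpose_mat g = M * (g * transpose_mat g)" using g gT M by simp
    also have "\<dots> = M" using gg M by simp
    finally show ?thesis .
  qed
  show ?thesis using 1 2 by (simp add: act_def xv)
qed

lemma necessary:
  assumes i1: "1 \<le> i" and id: "i < d" and O: "g \<in> orth_group d"
    and inv: "\<And>x. x \<in> Lsub d i \<Longrightarrow> act g x \<in> Lsub d i"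
  shows "\<forall>r<d. \<forall>c<d. r \<noteq> c \<and> (d - i \<le> r \<or> d - i \<le> c) \<longrightarrow> g $$ (r, c) = 0"
proof -
  have g: "g \<in> carrier_mat d d" using O by (auto simp: orth_group_def)
  have gT: "transpose_mat g \<in> carrier_mat d d" using g by simp
  have inv': "act g x \<in> Lc d i" if "x \<in> Lc d i" for x using inv that L_char[OF i1 id] by simp
  define Q where "Q m \<longleftrightarrow> (\<forall>r<d. \<forall>c<d. r \<noteq> c \<and> (m \<le> r \<or> m \<le> c) \<longrightarrow> g $$ (r, c) = 0)" for m
  have diag: "g $$ (m, m) \<noteq> 0" if "Q m" "m < d" for m
  proof -
    have "(\<Sum>k\<in>{0..<d}. g $$ (m, k) * g $$ (m, k)) = g $$ (m, m) * g $$ (m, m)"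
      using that by (intro sum_single) (auto simp: Q_def)
    then have "g $$ (m, m) * g $$ (m, m) = 1" using orth_row[OF O, of m m] that by simp
    then show ?thesis by auto
  qed
  have step: "Q m" if QS: "Q (Suc m)" and m: "m < d" and col: "\<And>r. r < d \<Longrightarrow> r \<noteq> m \<Longrightarrow> g $$ (r, m) = 0" for m
  proof -
    have "(\<Sum>k\<in>{0..<d}. g $$ (k, m) * g $$ (k, m)) = g $$ (m, m) * g $$ (m, m)"
      using m col by (intro sum_single) auto
    then have "g $$ (m, m) * g $$ (m, m) = 1" using orth_col[OF O, of m m] m by simp
    then have nz: "g $$ (m, m) \<noteq> 0" by auto
    have row: "g $$ (m, c) = 0" if "c < d" "c \<noteq> m" for c
    proof -
      have "(\<Sum>k\<in>{0..<d}. g $$ (k, m) * g $$ (k, c)) = g $$ (m, m) * g $$ (m, c)"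
        using m col by (intro sum_single) auto
      then have "g $$ (m, m) * g $$ (m, c) = 0" using orth_col[OF O, of m c] m that by simp
      then show ?thesis using nz by simp
    qed
    show ?thesis unfolding Q_def
    proof (intro allI impI)
      fix r c assume r: "r < d" and c: "c < d" and rc: "r \<noteq> c \<and> (m \<le> r \<or> m \<le> c)"
      show "g $$ (r, c) = 0"
      proof (cases "r = m")
        case True then show ?thesis using row c rc by simp
      next
        case False
        show ?thesis
        proof (cases "c = m")
          case True then show ?thesis using col r False by simp
        next
          case False2: False
          then have "Suc m \<le> r \<or> Suc m \<le> c" using rc False by auto
          then show ?thesis using QS r c rc unfolding Q_def by blast
        qed
      qed
    qed
  qed
  have colzero: "g $$ (r, m) = 0" if QS: "Q (Suc m)" and m: "m < d" and mi: "d - i \<le> m"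
      and r: "r < d" "r \<noteq> m" for m r
  proof (cases "m = d - 1")
    case True
    define x0 where "x0 = (unit_vec d (d - 1) :: complex vec, 0\<^sub>m d d :: complex mat)"
    have "transpose_mat (0\<^sub>m d d :: complex mat) = - 0\<^sub>m d d" by (intro eq_matI) auto
    then have "x0 \<in> Lc d i" by (auto simp: x0_def Lc_def Vsp_def)
    then have "act g x0 \<in> Lc d i" by (rule inv')
    then have "(g *\<^sub>v unit_vec d (d - 1)) $ r = 0" using r True by (auto simp: Lc_def act_def x0_def)
    moreover have "(g *\<^sub>v unit_vec d (d - 1)) $ r = (\<Sum>a\<in>{0..<d}. g $$ (r, a) * unit_vec d (d - 1) $ a)"
      using g r by (simp add: scalar_prod_def)
    moreover have "\<dots> = g $$ (r, d - 1) * unit_vec d (d - 1) $ (d - 1)"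
      using m True by (intro sum_single) auto
    ultimately show ?thesis using True m by simp
  next
    case False
    then have m1: "Suc m < d" using m by auto
    show ?thesis
    proof (cases "m < r")
      case True then show ?thesis using QS r m unfolding Q_def by auto
    next
      case False
      then have rm: "r < m" using r by auto
      define M0 :: "complex mat" where "M0 = mat d d (\<lambda>(a, b). if a = m \<and> b = Suc m then 1 else if a = Suc m \<and> b = m then -1 else 0)"
      have M0c: "M0 \<in> carrier_mat d d" by (simp add: M0_def)
      have "transpose_mat M0 = - M0" by (intro eq_matI) (auto simp: M0_def)
      then have "(0\<^sub>v d, M0) \<in> Lc d i" by (auto simp: Lc_def Vsp_def M0_def)
      then have "act g (0\<^sub>v d, M0) \<in> Lc d i" by (rule inv')
      then have E0: "(g * M0 * transpose_mat g) $$ (r, Suc m) = 0" using rm m1 mi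
        unfolding Lc_def act_def by auto
      have gM0: "g * M0 \<in> carrier_mat d d" using g M0c by simp
      have "(g * M0 * transpose_mat g) $$ (r, Suc m) = (\<Sum>b\<in>{0..<d}. (g * M0) $$ (r, b) * transpose_mat g $$ (b, Suc m))"
        using mult_entry[OF gM0 gT r(1) m1] .
      also have "\<dots> = (g * M0) $$ (r, Suc m) * transpose_mat g $$ (Suc m, Suc m)"
      proof (rule sum_single)
        show "Suc m < d" by fact
        show "\<forall>b<d. b \<noteq> Suc m \<longrightarrow> (g * M0) $$ (r, b) * transpose_mat g $$ (b, Suc m) = 0"
        proof (intro allI impI)
          fix b assume b: "b < d" "b \<noteq> Suc m"
          then have "g $$ (Suc m, b) = 0" using QS m1 unfolding Q_def by auto
          then show "(g * M0) $$ (r, b) * transpose_mat g $$ (b, Suc m) = 0" using b m1 g by simp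
        qed
      qed
      also have "(g * M0) $$ (r, Suc m) = (\<Sum>a\<in>{0..<d}. g $$ (r, a) * M0 $$ (a, Suc m))"
        using mult_entry[OF g M0c r(1) m1] .
      also have "\<dots> = g $$ (r, m) * M0 $$ (m, Suc m)"
        using m m1 by (intro sum_single) (auto simp: M0_def)
      also have "M0 $$ (m, Suc m) = 1" using m m1 by (simp add: M0_def)
      finally have "g $$ (r, m) * g $$ (Suc m, Suc m) = 0" using E0 m1 g by simp
      moreover have "g $$ (Suc m, Suc m) \<noteq> 0" using diag[OF QS m1] .
      ultimately show ?thesis by simp
    qed
  qed
  have "n \<le> i \<Longrightarrow> Q (d - n)" for n
  proof (induction n)
    case 0 then show ?case by (simp add: Q_def)
  next
    case (Suc n)
    then have QS: "Q (Suc (d - Suc n))" using id by (simp add: Suc_diff_Suc)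
    show ?case
    proof (rule step[OF QS])
      show "d - Suc n < d" using Suc.prems id by simp
      show "g $$ (r, d - Suc n) = 0" if "r < d" "r \<noteq> d - Suc n" for r
        using colzero[OF QS _ _ that] Suc.prems id by simp
    qed
  qed
  then have "Q (d - i)" by simp
  then show ?thesis by (simp add: Q_def)
qed

theorem proposition3p5:
  fixes d i :: nat
  assumes "2 \<le> d" and "1 \<le> i" and "i < d"
  shows "{g \<in> orth_group d. act g ` Lsub d i = Lsub d i} = Nsub d (d - i)"
proof -
  have jd: "d - i \<le> d" by simp
  show ?thesis
  proof (rule equalityI; rule subsetI)
    fix g assume "g \<in> {g \<in> orth_group d. act g ` Lsub d i = Lsub d i}"
    then have O: "g \<in> orth_group d" and E: "act g ` Lsub d i = Lsub d i" by auto
    have "\<And>x. x \<in> Lsub d i \<Longrightarrow> act g x \<in> Lsub d i" using E by blast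
    then have "\<forall>r<d. \<forall>c<d. r \<noteq> c \<and> (d - i \<le> r \<or> d - i \<le> c) \<longrightarrow> g $$ (r, c) = 0"
      by (rule necessary[OF assms(2,3) O])
    then show "g \<in> Nsub d (d - i)" using O N_char[OF jd] by simp
  next
    fix g assume "g \<in> Nsub d (d - i)"
    then have O: "g \<in> orth_group d"
      and Z: "\<And>r c. r < d \<Longrightarrow> c < d \<Longrightarrow> r \<noteq> c \<Longrightarrow> d - i \<le> r \<or> d - i \<le> c \<Longrightarrow> g $$ (r, c) = 0"
      using N_char[OF jd] by auto
    have gc: "g \<in> carrier_mat d d" using O by (auto simp: orth_group_def)
    have OT: "transpose_mat g \<in> orth_group d" using orth_T[OF O] gc by (simp add: orth_group_def)
    have ZT: "transpose_mat g $$ (r, c) = 0"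
      if "r < d" "c < d" "r \<noteq> c" "d - i \<le> r \<or> d - i \<le> c" for r c
      using Z[of c r] that gc by auto
    have "act g ` Lsub d i \<subseteq> Lsub d i" using preserve[OF assms(2,3) O Z] by blast
    moreover have "Lsub d i \<subseteq> act g ` Lsub d i"
    proof
      fix x assume x: "x \<in> Lsub d i"
      have xV: "x \<in> Vsp d" using x L_char[OF assms(2,3)] by (simp add: Lc_def)
      have "act (transpose_mat g) x \<in> Lsub d i" using preserve[OF assms(2,3) OT ZT x] by blast
      moreover have "x = act g (act (transpose_mat g) x)" using act_inv[OF O xV] by simp
      ultimately show "x \<in> act g ` Lsub d i" by blast
    qed
    ultimately show "g \<in> {g \<in> orth_group d. act g ` Lsub d i = Lsub d i}" using O by blast
  qed
qed

end
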